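(* For every positive integer $d$, there exist infinitely many monic rigid Carmichael polynomials of order $d$ in $\mathbb{F}_q[t]$.
   Context: $\mathbb{F}_q$ is the finite field with $q$ elements. For an integer $d\ge1$, a rigid Carmichael polynomial of order $d$ in $\mathbb{F}_q[t]$ is a reducible square-free polynomial $g\in\mathbb{F}_q[t]$ such that $i\cdot\deg P$ divides $d\cdot\deg g$ for every irreducible polynomial $P$ dividing $g$ and every $i=1,\dots,d$. *)

theory Defs
  imports "HOL-Computational_Algebra.Computational_Algebra"
begin

definition rigid_carmichael :: "nat \<Rightarrow> 'a::field poly \<Rightarrow> bool" where
  "rigid_carmichael d g \<longleftrightarrow>
     g \<noteq> 0 \<and> \<not> is_unit g \<and> \<not> irreducible g \<and> squarefree g \<and>
     (\<forall>P. irreducible P \<and> P dvd g \<longrightarrow>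
        (\<forall>i\<in>{1..d}. i * degree P dvd d * degree g))"

end

theory Submission
  imports Defs "HOL-Algebra.Algebraic_Closure_Type"
begin

hide_const (open) Polynomials.degree Polynomials.lead_coeff up_ring.monom Coset.order
  Congruence.partition Divisibility.prime Divisibility.irreducible up_ring.coeff module.smult

lemma ff_power_card: "(x::'a::{finite,field}) ^ card (UNIV::'a set) = x"
proof (cases "x = 0")
  case False
  have "x * (\<Prod>y\<in>UNIV-{0}. x * y) = x * x ^ (card (UNIV :: 'a set) - 1) * \<Prod>(UNIV-{0})"
    by (simp add: prod.distrib mult_ac)
  also have "x * x ^ (card (UNIV :: 'a set) - 1) = x ^ Suc (card (UNIV :: 'a set) - 1)"
    by (subst power_Suc) auto
  also have "Suc (card (UNIV :: 'a set) - 1) = card (UNIV :: 'a set)"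
    using finite_UNIV_card_ge_0[where ?'a = 'a] by simp
  also have "(\<Prod>y\<in>UNIV-{0}. x * y) = (\<Prod>y\<in>UNIV-{0}. y)"
    by (rule prod.reindex_bij_witness[of _ "\<lambda>y. y / x" "\<lambda>y. x * y"]) (use False in auto)
  finally show ?thesis
    by simp
qed (use finite_UNIV_card_ge_0[where ?'a = 'a] in auto)

lemma ff_prime_char: "prime CHAR('a::{finite,field})"
  by (rule prime_CHAR_semidom[OF finite_imp_CHAR_pos]) simp

lemma ff_of_nat_pow: "(of_nat n :: 'a::{finite,field}) ^ CHAR('a) = of_nat n"
proof (induction n)
  case 0 then show ?case using ff_prime_char[where 'a='a] by (simp add: prime_gt_0_nat)
next
  case (Suc n)
  have "(of_nat (Suc n) :: 'a) ^ CHAR('a) = (of_nat n + 1) ^ CHAR('a)" by (metis of_nat_Suc add.commute)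
  also have "\<dots> = of_nat n ^ CHAR('a) + 1 ^ CHAR('a)"
    by (rule freshmans_dream[OF ff_prime_char refl])
  also have "\<dots> = of_nat n + 1" using Suc by simp
  also have "\<dots> = of_nat (Suc n)" by (metis of_nat_Suc add.commute)
  finally show ?case .
qed

definition primef :: "'a::{finite,field} set" where "primef = range of_nat"

lemma primef_add: "a \<in> primef \<Longrightarrow> b \<in> primef \<Longrightarrow> a + b \<in> primef"
  unfolding primef_def by (auto simp flip: of_nat_add)
lemma primef_mult: "a \<in> primef \<Longrightarrow> b \<in> primef \<Longrightarrow> a * b \<in> primef"
  unfolding primef_def by (auto simp flip: of_nat_mult)
lemma primef_one: "1 \<in> primef" unfolding primef_def by (metis of_nat_1 rangeI)
lemma primef_power: "a \<in> primef \<Longrightarrow> a ^ k \<in> primef"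
  by (induction k) (auto intro: primef_mult primef_one)

lemma primef_uminus: "(a::'a::{finite,field}) \<in> primef \<Longrightarrow> - a \<in> primef"
proof -
  assume "a \<in> primef"
  then obtain n where a: "a = of_nat n" by (auto simp: primef_def)
  have "of_nat ((CHAR('a) - 1) * n) + a = (of_nat (CHAR('a) * n) :: 'a)"
    using ff_prime_char[where 'a='a] prime_gt_0_nat[of "CHAR('a)"]
    by (simp add: a flip: of_nat_add)
  also have "\<dots> = 0" by simp
  finally have "of_nat ((CHAR('a) - 1) * n) = - a" by (simp only: eq_neg_iff_add_eq_0)
  thus ?thesis by (metis primef_def rangeI)
qed

lemma primef_diff: "(a::'a::{finite,field}) \<in> primef \<Longrightarrow> b \<in> primef \<Longrightarrow> a - b \<in> primef"
  unfolding diff_conv_add_uminus by (rule primef_add) (auto intro: primef_uminus)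

lemma primef_inv: "(c::'a::{finite,field}) \<in> primef \<Longrightarrow> c \<noteq> 0 \<Longrightarrow> \<exists>d\<in>primef. d * c = 1"
proof -
  assume c: "c \<in> primef" "c \<noteq> 0"
  let ?p = "CHAR('a)"
  have p2: "?p \<ge> 2" using ff_prime_char[where 'a='a] prime_ge_2_nat by blast
  from c obtain n where cn: "c = of_nat n" by (auto simp: primef_def)
  have "c ^ ?p = c" using ff_of_nat_pow cn by simp
  moreover have "c ^ ?p = c ^ (?p - 2) * c * c"
  proof -
    have "?p = Suc (Suc (?p - 2))" using p2 by simp
    then have "c ^ ?p = c ^ Suc (Suc (?p - 2))" by simp
    also have "\<dots> = c ^ (?p - 2) * c * c" by (simp add: algebra_simps)
    finally show ?thesis .
  qed
  ultimately have "c ^ (?p - 2) * c = 1" using c(2) by (metis mult_cancel_right2 mult_1)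
  thus ?thesis using primef_power[OF c(1)] by blast
qed

lemma of_nat_inj_CHAR:
  assumes "m < CHAR('a::{finite,field})" "n < CHAR('a)" "(of_nat m :: 'a) = of_nat n" "m < n"
  shows False
proof -
  have "(of_nat (n - m) :: 'a) = of_nat n - of_nat m" using assms(4) by (intro of_nat_diff) simp
  also have "\<dots> = 0" using assms(3) by simp
  finally have "CHAR('a) dvd (n - m)" by (simp only: of_nat_eq_0_iff_char_dvd)
  then have "CHAR('a) \<le> n - m" using assms(4) by (intro dvd_imp_le) auto
  then show False using assms(2) by linarith
qed

lemma card_primef: "card (primef :: 'a::{finite,field} set) = CHAR('a)"
proof -
  let ?p = "CHAR('a)"
  have p0: "?p > 0" using ff_prime_char[where 'a='a] prime_gt_0_nat by blast
  have "primef = (of_nat :: nat \<Rightarrow> 'a) ` {..<?p}"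
  proof
    show "primef \<subseteq> (of_nat :: nat \<Rightarrow> 'a) ` {..<?p}"
    proof
      fix x :: 'a assume "x \<in> primef"
      then obtain n where xn: "x = of_nat n" by (auto simp: primef_def)
      have n: "n = n mod ?p + ?p * (n div ?p)" by simp
      have "(of_nat n :: 'a) = of_nat (n mod ?p) + of_nat ?p * of_nat (n div ?p)"
        by (subst n) (simp only: of_nat_add of_nat_mult)
      also have "\<dots> = of_nat (n mod ?p)" by simp
      finally have "x = of_nat (n mod ?p)" using xn by simp
      moreover have "n mod ?p < ?p" using p0 by simp
      ultimately show "x \<in> (of_nat :: nat \<Rightarrow> 'a) ` {..<?p}" by blast
    qed
  qed (auto simp: primef_def)
  moreover have "inj_on (of_nat :: nat \<Rightarrow> 'a) {..<?p}"
  proof (rule inj_onI)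
    fix m n assume mn: "m \<in> {..<?p}" "n \<in> {..<?p}" "(of_nat m :: 'a) = of_nat n"
    show "m = n"
    proof (rule ccontr)
      assume "m \<noteq> n"
      then consider "m < n" | "n < m" by linarith
      thus False
      proof cases
        case 1 then show False using of_nat_inj_CHAR[of m n, where 'a='a] mn by auto
      next
        case 2 then show False using of_nat_inj_CHAR[of n m, where 'a='a] mn by auto
      qed
    qed
  qed
  ultimately show ?thesis by (metis card_image card_lessThan)
qed

definition psub :: "'a::{finite,field} set \<Rightarrow> bool" where
  "psub T \<longleftrightarrow> 0 \<in> T \<and> (\<forall>x\<in>T. \<forall>y\<in>T. x + y \<in> T) \<and> (\<forall>c\<in>(primef::'a set). \<forall>x\<in>T. c * x \<in> T)"

lemma psub_extend:
  fixes T :: "'a::{finite,field} set"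
  assumes T: "psub T" and s: "s \<notin> T"
  shows "psub ((\<lambda>(t,c). t + c * s) ` (T \<times> primef)) \<and>
         card ((\<lambda>(t,c). t + c * s) ` (T \<times> primef)) = card T * CHAR('a)"
proof
  let ?T' = "(\<lambda>(t,c). t + c * s) ` (T \<times> primef)"
  have [simp]: "0 \<in> (primef::'a set)" "1 \<in> (primef::'a set)"
    unfolding primef_def by (metis of_nat_0 rangeI, metis of_nat_1 rangeI)
  show "psub ?T'"
    unfolding psub_def
  proof (intro conjI ballI)
    show "0 \<in> ?T'" using T unfolding psub_def by (force intro!: image_eqI[of _ _ "(0,0)"])
  next
    fix x y assume "x \<in> ?T'" "y \<in> ?T'"
    then obtain t1 c1 t2 c2 where "t1 \<in> T" "t2 \<in> T" "c1 \<in> primef" "c2 \<in> primef"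
      "x = t1 + c1 * s" "y = t2 + c2 * s" by auto
    then show "x + y \<in> ?T'" using T unfolding psub_def
      by (auto intro!: image_eqI[of _ _ "(t1 + t2, c1 + c2)"] primef_add simp: algebra_simps)
  next
    fix c x assume "c \<in> (primef::'a set)" "x \<in> ?T'"
    then obtain t1 c1 where "t1 \<in> T" "c1 \<in> primef" "x = t1 + c1 * s" by auto
    then show "c * x \<in> ?T'" using T \<open>c \<in> primef\<close> unfolding psub_def
      by (auto intro!: image_eqI[of _ _ "(c * t1, c * c1)"] primef_mult simp: algebra_simps)
  qed
  have inj: "inj_on (\<lambda>(t,c). t + c * s) (T \<times> primef)"
  proof (rule inj_onI, clarsimp)
    fix t1 c1 t2 c2 assume h: "t1 \<in> T" "c1 \<in> primef" "t2 \<in> T" "c2 \<in> primef" "t1 + c1 * s = t2 + c2 * s"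
    show "t1 = t2 \<and> c1 = c2"
    proof (cases "c1 = c2")
      case True then show ?thesis using h by simp
    next
      case False
      have "c1 - c2 \<in> primef" using h by (simp add: primef_diff)
      then obtain d where d: "d \<in> primef" "d * (c1 - c2) = 1" using primef_inv False by force
      have m1: "(-1 :: 'a) \<in> primef" by (simp add: primef_uminus)
      have "t2 + (-1) * t1 \<in> T" using T h m1 unfolding psub_def by blast
      then have "d * (t2 + (-1) * t1) \<in> T" using T d unfolding psub_def by blast
      moreover have "d * (t2 + (-1) * t1) = s"
      proof -
        have "t2 + (-1) * t1 = (c1 - c2) * s" using h(5) by (simp add: algebra_simps)
        then show ?thesis using d(2) by (simp add: mult.assoc[symmetric])
      qed
      ultimately show ?thesis using s by simp
    qed
  qed
  show "card ?T' = card T * CHAR('a)"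
    by (simp add: card_image[OF inj] card_cartesian_product card_primef)
qed

lemma card_ff_prime_power_aux:
  fixes T :: "'a::{finite,field} set"
  assumes "psub T" "card T = CHAR('a) ^ j"
  shows "\<exists>m. card (UNIV::'a set) = CHAR('a) ^ m"
  using assms
proof (induction "card (UNIV::'a set) - card T" arbitrary: T j rule: less_induct)
  case (less T j)
  show ?case
  proof (cases "T = UNIV")
    case True then show ?thesis using less by auto
  next
    case False
    then obtain s where s: "s \<notin> T" by auto
    let ?T' = "(\<lambda>(t,c). t + c * s) ` (T \<times> (primef::'a set))"
    from psub_extend[OF less(2) s] have h: "psub ?T'" "card ?T' = card T * CHAR('a)" by auto
    have "card ?T' = CHAR('a) ^ Suc j" using h less(3) by simp
    moreover have "card T < card ?T'"
      using h(2) less(3) ff_prime_char[where 'a='a] prime_ge_2_nat[of "CHAR('a)"] by simp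
    moreover have "card ?T' \<le> card (UNIV::'a set)" by (simp add: card_mono)
    ultimately have "card (UNIV::'a set) - card ?T' < card (UNIV::'a set) - card T" by linarith
    then show ?thesis using less(1)[OF _ h(1)] \<open>card ?T' = CHAR('a) ^ Suc j\<close> by blast
  qed
qed

lemma card_ff_prime_power: "\<exists>m. card (UNIV::'a::{finite,field} set) = CHAR('a) ^ m"
proof -
  have "psub {0::'a}" unfolding psub_def by simp
  then show ?thesis using card_ff_prime_power_aux[of "{0::'a}" 0] by simp
qed


section \<open>Ring homomorphisms and map_poly\<close>

lemma hom_sum:
  assumes f0: "f 0 = 0" and fadd: "\<And>a b. f (a + b) = f a + f b"
  shows "f (sum g A) = sum (\<lambda>x. f (g x)) A"
  by (induction A rule: infinite_finite_induct) (simp_all add: f0 fadd)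

lemma map_poly_hom_add:
  assumes f0: "f 0 = 0" and fadd: "\<And>a b. f (a + b) = f a + f b"
  shows "map_poly f (p + r) = map_poly f p + map_poly f r"
  by (intro poly_eqI) (simp add: coeff_map_poly f0 fadd)

lemma map_poly_hom_mult:
  fixes f :: "'b::comm_ring_1 \<Rightarrow> 'c::comm_ring_1"
  assumes f0: "f 0 = 0" and fadd: "\<And>a b. f (a + b) = f a + f b"
      and fmul: "\<And>a b. f (a * b) = f a * f b"
  shows "map_poly f (p * r) = map_poly f p * map_poly f r"
proof (intro poly_eqI)
  fix n
  show "coeff (map_poly f (p * r)) n = coeff (map_poly f p * map_poly f r) n"
    by (simp add: coeff_map_poly f0 coeff_mult hom_sum[of f, OF f0 fadd] fmul)
qed

lemma map_poly_hom_prod: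
  fixes f :: "'b::comm_ring_1 \<Rightarrow> 'c::comm_ring_1"
  assumes f0: "f 0 = 0" and f1: "f 1 = 1" and fadd: "\<And>a b. f (a + b) = f a + f b"
      and fmul: "\<And>a b. f (a * b) = f a * f b"
  shows "map_poly f (\<Prod>x\<in>A. g x) = (\<Prod>x\<in>A. map_poly f (g x))"
proof (induction A rule: infinite_finite_induct)
  case (insert x F)
  then show ?case by (simp add: map_poly_hom_mult[of f, OF f0 fadd fmul])
qed (simp_all add: f1)

lemma hom_uminus:
  fixes f :: "'b::comm_ring_1 \<Rightarrow> 'c::comm_ring_1"
  assumes f0: "f 0 = 0" and fadd: "\<And>a b. f (a + b) = f a + f b"
  shows "f (- a) = - f a"
proof -
  have "f a + f (- a) = 0" using fadd[of a "-a"] f0 by simp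
  then show ?thesis by (simp add: eq_neg_iff_add_eq_0 add.commute)
qed

section \<open>Frobenius in the algebraic closure\<close>

type_synonym 'a ac = "'a alg_closure"

lemma frob_exp:
  assumes "Q = card (UNIV::'a::{finite,field} set) ^ k"
  shows "\<exists>m. Q = CHAR('a alg_closure) ^ m"
proof -
  obtain m where "card (UNIV::'a set) = CHAR('a) ^ m" using card_ff_prime_power by blast
  then show ?thesis using assms by (auto simp: power_mult[symmetric])
qed

lemma frob_add:
  fixes x y :: "'a::{finite,field} alg_closure"
  assumes "Q = card (UNIV::'a set) ^ k"
  shows "(x + y) ^ Q = x ^ Q + y ^ Q"
proof -
  obtain m where m: "Q = CHAR('a alg_closure) ^ m" using frob_exp[OF assms] by blast
  have "prime CHAR('a alg_closure)" using ff_prime_char[where 'a='a] by simp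
  then show ?thesis by (rule freshmans_dream'[OF _ m])
qed

lemma card_ge2: "card (UNIV::'a::{finite,field} set) \<ge> 2"
proof -
  have "{0::'a, 1} \<subseteq> UNIV" by simp
  then have "card {0::'a, 1} \<le> card (UNIV::'a set)" by (intro card_mono) auto
  then show ?thesis by simp
qed

lemma Q_pos: "Q = card (UNIV::'a::{finite,field} set) ^ k \<Longrightarrow> Q > 0"
  using card_ge2[where 'a='a] by simp

lemma frob_uminus:
  fixes x :: "'a::{finite,field} alg_closure"
  assumes "Q = card (UNIV::'a set) ^ k"
  shows "(- x) ^ Q = - (x ^ Q)"
proof -
  have "(x + (- x)) ^ Q = x ^ Q + (- x) ^ Q" by (rule frob_add[OF assms])
  moreover have "(0::'a alg_closure) ^ Q = 0" using Q_pos[OF assms] by simp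
  ultimately have "x ^ Q + (- x) ^ Q = 0" by simp
  then show ?thesis by (simp add: eq_neg_iff_add_eq_0 add.commute)
qed

lemma frob_diff:
  fixes x y :: "'a::{finite,field} alg_closure"
  assumes "Q = card (UNIV::'a set) ^ k"
  shows "(x - y) ^ Q = x ^ Q - y ^ Q"
  using frob_add[OF assms, of x "- y"] frob_uminus[OF assms, of y] by simp

lemma frob_inj:
  fixes x y :: "'a::{finite,field} alg_closure"
  assumes "Q = card (UNIV::'a set) ^ k" "x ^ Q = y ^ Q"
  shows "x = y"
proof -
  have "(x - y) ^ Q = 0" using frob_diff[OF assms(1)] assms(2) by simp
  then show ?thesis by simp
qed

lemma frob_to_ac:
  assumes "Q = card (UNIV::'a::{finite,field} set) ^ k"
  shows "to_ac (c::'a) ^ Q = to_ac c"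
proof -
  have "c ^ Q = c" unfolding assms
    by (induction k) (simp_all add: power_mult ff_power_card)
  then show ?thesis by (metis to_ac_power)
qed

lemma frob_sum:
  fixes g :: "'b \<Rightarrow> 'a::{finite,field} alg_closure"
  assumes "Q = card (UNIV::'a set) ^ k"
  shows "(sum g A) ^ Q = sum (\<lambda>x. g x ^ Q) A"
  using hom_sum[of "\<lambda>x. x ^ Q", OF _ frob_add[OF assms]] Q_pos[OF assms] by simp

lemma poly_frob:
  fixes y :: "'a::{finite,field} alg_closure"
  assumes "Q = card (UNIV::'a set) ^ k"
  shows "poly (map_poly to_ac P) (y ^ Q) = (poly (map_poly to_ac P) y) ^ Q"
proof -
  have "(poly (map_poly to_ac P) y) ^ Q = (\<Sum>i\<le>degree (map_poly to_ac P). (coeff (map_poly to_ac P) i * y ^ i) ^ Q)"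
    by (simp add: poly_altdef frob_sum[OF assms])
  also have "\<dots> = (\<Sum>i\<le>degree (map_poly to_ac P). coeff (map_poly to_ac P) i * (y ^ Q) ^ i)"
    by (intro sum.cong refl)
       (simp add: coeff_map_poly power_mult_distrib frob_to_ac[OF assms] flip: power_mult, simp add: mult.commute)
  also have "\<dots> = poly (map_poly to_ac P) (y ^ Q)" by (simp add: poly_altdef)
  finally show ?thesis by simp
qed

lemma frob_fixed_in_range:
  fixes y :: "'a::{finite,field} alg_closure"
  assumes "y ^ card (UNIV::'a set) = y"
  shows "y \<in> range to_ac"
proof -
  let ?q = "card (UNIV::'a set)"
  let ?f = "monom (1::'a alg_closure) ?q - [:0, 1:]"
  have q2: "?q \<ge> 2" by (rule card_ge2)
  have deg: "degree ?f = ?q"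
  proof -
    have "degree (monom (1::'a alg_closure) ?q + (- [:0,1:])) = ?q"
      using q2 by (subst degree_add_eq_left) (simp_all add: degree_monom_eq)
    then show ?thesis by (simp only: diff_conv_add_uminus)
  qed
  then have f0: "?f \<noteq> 0" using q2 by auto
  have roots: "{x. poly ?f x = 0} = {x. x ^ ?q = x}" by (simp add: poly_monom)
  have "card {x::'a alg_closure. x ^ ?q = x} \<le> ?q"
    using card_poly_roots_bound[OF f0] deg roots by simp
  moreover have "range to_ac \<subseteq> {x::'a alg_closure. x ^ ?q = x}"
    using frob_to_ac[of ?q 1] by auto
  moreover have "card (range (to_ac :: 'a \<Rightarrow> _)) = ?q"
    by (simp add: card_image inj_to_ac)
  moreover have "finite {x::'a alg_closure. x ^ ?q = x}"
    using poly_roots_finite[OF f0] roots by simp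
  ultimately have "range to_ac = {x::'a alg_closure. x ^ ?q = x}"
    by (metis card_seteq)
  then show ?thesis using assms by auto
qed


lemma card_set_mset_count1:
  assumes "\<And>a. count A a \<le> 1"
  shows "card (set_mset A) = size A"
  using assms
proof (induction A)
  case (add x B)
  have "count (add_mset x B) x \<le> 1" by (rule add.prems)
  then have "x \<notin># B" by (simp add: count_eq_zero_iff[symmetric])
  moreover have "\<And>a. count B a \<le> 1" using add.prems by (metis count_add_mset le_SucI le_Suc_eq nat_le_linear not_less_eq_eq)
  ultimately show ?case using add.IH by simp
qed simp

lemma sep_count:
  assumes Q: "Q = card (UNIV::'a::{finite,field} set) ^ k" and k: "k \<ge> 1"
  shows "card {y::'a alg_closure. y ^ Q = y} = Q"
proof -
  let ?q = "card (UNIV::'a set)"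
  define f where "f = monom (1::'a alg_closure) Q - [:0, 1:]"
  have "?q ^ 1 \<le> ?q ^ k" using k card_ge2[where 'a='a] by (intro power_increasing) auto
  then have Q2: "Q \<ge> 2" using Q card_ge2[where 'a='a] by simp
  have deg: "degree f = Q"
  proof -
    have "degree (monom (1::'a alg_closure) Q + (- [:0,1:])) = Q"
      using Q2 by (subst degree_add_eq_left) (simp_all add: degree_monom_eq)
    then show ?thesis unfolding f_def by (simp only: diff_conv_add_uminus)
  qed
  then have f0: "f \<noteq> 0" using Q2 by auto
  have lc: "lead_coeff f = 1"
  proof -
    have "coeff f Q = 1" using Q2 unfolding f_def by (auto simp: coeff_pCons split: nat.split)
    then show ?thesis using deg by simp
  qed
  obtain A where A: "size A = degree f" "f = smult (lead_coeff f) (\<Prod>x\<in>#A. [:-x, 1:])"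
    using alg_closed_imp_factorization[OF f0] by blast
  have fA: "f = (\<Prod>x\<in>#A. [:-x, 1:])" using A(2) lc by simp
  have roots: "{y. y ^ Q = y} = set_mset A"
  proof -
    have "y ^ Q = y \<longleftrightarrow> poly f y = 0" for y by (simp add: poly_monom f_def)
    also have "poly f y = 0 \<longleftrightarrow> y \<in># A" for y
      by (subst fA) (auto simp: poly_prod_mset)
    finally show ?thesis by auto
  qed
  have CQ: "(of_nat Q :: 'a alg_closure) = 0"
  proof -
    obtain m where "Q = CHAR('a alg_closure) ^ m" using frob_exp[OF Q] by blast
    moreover have "m \<noteq> 0" using Q2 calculation by (cases m) auto
    ultimately show ?thesis by (simp add: of_nat_eq_0_iff_char_dvd)
  qed
  have pd: "pderiv f = [:- 1:]"
    using CQ unfolding f_def by (simp add: pderiv_diff pderiv_monom pderiv_pCons)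
  have cnt: "count A a \<le> 1" for a
  proof (rule ccontr)
    assume "\<not> count A a \<le> 1"
    then have "0 < count A a" by linarith
    then have "a \<in># A" using count_greater_zero_iff by metis
    from multi_member_split[OF this] obtain B where B: "A = add_mset a B" ..
    then have "count B a \<ge> 1" using \<open>\<not> count A a \<le> 1\<close> by simp
    then have "0 < count B a" by linarith
    then have "a \<in># B" using count_greater_zero_iff by metis
    from multi_member_split[OF this] obtain C where C: "B = add_mset a C" ..
    define r where "r = [:-a,1:] * (\<Prod>x\<in>#C. [:-x, 1:])"
    have fr: "f = [:-a,1:] * r" using fA B C by (simp add: r_def)
    have ra: "poly r a = 0" by (simp add: r_def)
    have "pderiv f = [:-a,1:] * pderiv r + r * pderiv [:-a,1:]"
      unfolding fr by (rule pderiv_mult)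
    then have "poly (pderiv f) a = poly [:-a,1:] a * poly (pderiv r) a + poly r a * poly (pderiv [:-a,1:]) a"
      by (simp only: poly_add poly_mult)
    then have "poly (pderiv f) a = 0" using ra by simp
    then show False using pd by simp
  qed
  show ?thesis using roots card_set_mset_count1[OF cnt] A(1) deg by simp
qed

section \<open>Orbits\<close>

lemma pow_pow_q: "((b::'b::monoid_mult) ^ (q ^ i)) ^ (q ^ j) = b ^ (q ^ (i + j))"
  by (metis power_add power_mult)

lemma fix_mult:
  assumes "(b::'b::monoid_mult) ^ (q ^ d) = b"
  shows "b ^ (q ^ (d * x)) = b"
proof (induction x)
  case (Suc x)
  have "b ^ (q ^ (d * Suc x)) = (b ^ (q ^ (d * x))) ^ (q ^ d)"
    by (simp add: pow_pow_q add.commute)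
  then show ?case using Suc assms by simp
qed simp

lemma period_prime:
  assumes l: "prime l" and d: "0 < d" "d < l"
    and bd: "(b::'b::monoid_mult) ^ (q ^ d) = b" and bl: "b ^ (q ^ l) = b"
  shows "b ^ q = b"
proof -
  have "\<not> l dvd d" using d by (simp add: nat_dvd_not_less)
  then have "coprime l d" using l prime_imp_coprime by blast
  then have "coprime d l" by (simp add: coprime_commute)
  then obtain x y where xy: "d * x = l * y + 1" using bezout_nat[of d l] d by auto
  have "b ^ (q ^ (d * x)) = b" by (rule fix_mult[OF bd])
  moreover have "b ^ (q ^ (l * y + 1)) = (b ^ (q ^ (l * y))) ^ q" using pow_pow_q[of b q "l * y" 1] by simp
  moreover have "b ^ (q ^ (l * y)) = b" by (rule fix_mult[OF bl])
  ultimately show ?thesis using xy by simp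
qed

lemma orbit_inj:
  fixes b :: "'a::{finite,field} alg_closure"
  assumes l: "prime l" and q: "q = card (UNIV::'a set)"
    and bl: "b ^ (q ^ l) = b" and bq: "b ^ q \<noteq> b"
  shows "inj_on (\<lambda>k. b ^ (q ^ k)) {..<l}"
proof (rule inj_onI)
  fix i j assume ij: "i \<in> {..<l}" "j \<in> {..<l}" "b ^ (q ^ i) = b ^ (q ^ j)"
  have key: "b ^ (q ^ i) = b ^ (q ^ j) \<Longrightarrow> i < j \<Longrightarrow> j < l \<Longrightarrow> False" for i j
  proof -
    assume h: "b ^ (q ^ i) = b ^ (q ^ j)" "i < j" "j < l"
    have "(b ^ (q ^ (j - i))) ^ (q ^ i) = b ^ (q ^ j)"
      using h by (simp add: pow_pow_q)
    then have "(b ^ (q ^ (j - i))) ^ (q ^ i) = b ^ (q ^ i)" using h by simp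
    then have "b ^ (q ^ (j - i)) = b" using frob_inj[of "q ^ i" i "b ^ (q ^ (j - i))" b] q by blast
    moreover have "j - i < l" "0 < j - i" using h by linarith+
    ultimately show False using period_prime[OF l, where d="j - i", OF _ _ _ bl] bq by blast
  qed
  show "i = j" using key[of i j] key[of j i] ij by (cases i j rule: linorder_cases) auto
qed

lemma card_orbit:
  fixes b :: "'a::{finite,field} alg_closure"
  assumes l: "prime l" and q: "q = card (UNIV::'a set)"
    and bl: "b ^ (q ^ l) = b" and bq: "b ^ q \<noteq> b"
  shows "card ((\<lambda>k. b ^ (q ^ k)) ` {..<l}) = l"
  using card_image[OF orbit_inj[OF assms]] by simp

lemma orbit_elem:
  fixes b :: "'a::{finite,field} alg_closure"
  assumes q: "q = card (UNIV::'a set)"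
    and bl: "b ^ (q ^ l) = b" and bq: "b ^ q \<noteq> b"
  shows "(b ^ (q ^ k)) ^ (q ^ l) = b ^ (q ^ k)" "(b ^ (q ^ k)) ^ q \<noteq> b ^ (q ^ k)"
proof -
  show "(b ^ (q ^ k)) ^ (q ^ l) = b ^ (q ^ k)"
    by (metis bl pow_pow_q add.commute)
  show "(b ^ (q ^ k)) ^ q \<noteq> b ^ (q ^ k)"
  proof
    assume "(b ^ (q ^ k)) ^ q = b ^ (q ^ k)"
    then have "(b ^ q) ^ (q ^ k) = b ^ (q ^ k)" by (metis power_mult mult.commute)
    then show False using frob_inj[of "q ^ k" k "b ^ q" b] q bq by simp
  qed
qed

lemma stable_iter:
  assumes "\<And>y. y \<in> T \<Longrightarrow> y ^ q \<in> T" "(b::'b::monoid_mult) \<in> T"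
  shows "b ^ (q ^ k) \<in> T"
proof (induction k)
  case (Suc k)
  have "b ^ (q ^ Suc k) = (b ^ (q ^ k)) ^ q" using pow_pow_q[of b q k 1] by simp
  then show ?case using Suc assms(1) by simp
qed (simp add: assms)

section \<open>Descent\<close>

lemma descent:
  fixes T :: "'a::{finite,field} alg_closure set"
  assumes fin: "finite T" and st: "\<And>y. y \<in> T \<Longrightarrow> y ^ card (UNIV::'a set) \<in> T"
  shows "coeff (\<Prod>y\<in>T. [:-y, 1:]) n \<in> range to_ac"
proof -
  let ?q = "card (UNIV::'a set)"
  let ?s = "\<lambda>c::'a alg_closure. c ^ ?q"
  have qk: "?q = ?q ^ 1" by simp
  have s0: "?s 0 = 0" and s1: "?s 1 = 1" using card_ge2[where 'a='a] by simp_all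
  have sadd: "?s (a + b) = ?s a + ?s b" for a b by (rule frob_add[OF qk])
  have smul: "?s (a * b) = ?s a * ?s b" for a b by (simp add: power_mult_distrib)
  have inj: "inj_on ?s T" by (intro inj_onI) (use frob_inj[OF qk] in blast)
  have bij: "?s ` T = T" by (rule endo_inj_surj[OF fin _ inj]) (use st in auto)
  have "map_poly ?s (\<Prod>y\<in>T. [:-y, 1:]) = (\<Prod>y\<in>T. map_poly ?s [:-y, 1:])"
    by (rule map_poly_hom_prod[OF s0 s1 sadd smul])
  also have "\<dots> = (\<Prod>y\<in>T. [:- ?s y, 1:])"
    by (intro prod.cong refl poly_eqI) (auto simp: coeff_map_poly[of ?s, OF s0] coeff_pCons frob_uminus[OF qk] s1 finite_UNIV_card_ge_0 split: nat.split)
  also have "\<dots> = (\<Prod>y\<in>?s ` T. [:- y, 1:])"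
    by (subst prod.reindex[OF inj]) simp
  also have "\<dots> = (\<Prod>y\<in>T. [:- y, 1:])" using bij by simp
  finally have "coeff (map_poly ?s (\<Prod>y\<in>T. [:-y, 1:])) n = coeff (\<Prod>y\<in>T. [:-y, 1:]) n" by simp
  then have "?s (coeff (\<Prod>y\<in>T. [:-y, 1:]) n) = coeff (\<Prod>y\<in>T. [:-y, 1:]) n"
    by (simp add: coeff_map_poly s0)
  then show ?thesis by (rule frob_fixed_in_range)
qed

lemma descent_poly:
  fixes T :: "'a::{finite,field} alg_closure set"
  assumes fin: "finite T" and st: "\<And>y. y \<in> T \<Longrightarrow> y ^ card (UNIV::'a set) \<in> T"
  shows "map_poly to_ac (map_poly of_ac (\<Prod>y\<in>T. [:-y, 1:])) = (\<Prod>y\<in>T. [:-y, 1:])"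
  by (intro poly_eqI) (simp add: coeff_map_poly to_ac_of_ac[OF descent[OF assms]])


lemma to_ac_hom_mult: "map_poly to_ac (p * r) = map_poly to_ac p * map_poly to_ac (r :: 'a::field poly)"
  by (rule map_poly_hom_mult) simp_all

lemma to_ac_hom_add: "map_poly to_ac (p + r) = map_poly to_ac p + map_poly to_ac (r :: 'a::field poly)"
  by (rule map_poly_hom_add) simp_all

lemma degree_to_ac [simp]: "degree (map_poly to_ac (p :: 'a::field poly)) = degree p"
  by (rule degree_map_poly) simp

lemma map_to_ac_eq_0 [simp]: "map_poly to_ac (p :: 'a::field poly) = 0 \<longleftrightarrow> p = 0"
proof
  assume "map_poly to_ac p = 0"
  then have "coeff (map_poly to_ac p) n = 0" for n by simp
  then have "coeff p n = 0" for n by (simp add: coeff_map_poly)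
  then show "p = 0" by (intro poly_eqI) simp
qed simp

lemma dvd_descent:
  fixes A B :: "'a::field poly"
  assumes A0: "A \<noteq> 0" and dv: "map_poly to_ac A dvd map_poly to_ac B"
  shows "A dvd B"
proof -
  have "B = B div A * A + B mod A" by simp
  then have "map_poly to_ac B = map_poly to_ac (B div A) * map_poly to_ac A + map_poly to_ac (B mod A)"
    by (metis to_ac_hom_add to_ac_hom_mult)
  then have dvm: "map_poly to_ac A dvd map_poly to_ac (B mod A)"
    using dv by (metis dvd_add_right_iff dvd_triv_right)
  have "B mod A = 0"
  proof (rule ccontr)
    assume m0: "B mod A \<noteq> 0"
    then have "degree (B mod A) < degree A" using degree_mod_less'[OF A0] by blast
    moreover have "degree (map_poly to_ac A) \<le> degree (map_poly to_ac (B mod A))"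
      by (rule dvd_imp_degree_le[OF dvm]) (simp add: m0)
    ultimately show False by simp
  qed
  then show ?thesis by (rule mod_0_imp_dvd)
qed

lemma prod_roots_dvd:
  fixes p :: "'b::idom poly"
  assumes "finite Ob" "\<And>y. y \<in> Ob \<Longrightarrow> poly p y = 0"
  shows "(\<Prod>y\<in>Ob. [:-y, 1:]) dvd p"
  using assms
proof (induction Ob rule: finite_induct)
  case (insert x F)
  then have "(\<Prod>y\<in>F. [:-y, 1:]) dvd p" by simp
  then obtain r where r: "p = (\<Prod>y\<in>F. [:-y, 1:]) * r" by (elim dvdE)
  have "poly p x = 0" using insert by simp
  moreover have "poly (\<Prod>y\<in>F. [:-y, 1:]) x \<noteq> 0" using insert(1,2) by (auto simp: poly_prod prod_zero_iff)
  ultimately have "poly r x = 0" using r by simp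
  then have "[:-x, 1:] dvd r" by (simp add: poly_eq_0_iff_dvd)
  then have "[:-x, 1:] * (\<Prod>y\<in>F. [:-y, 1:]) dvd r * (\<Prod>y\<in>F. [:-y, 1:])"
    by (rule mult_dvd_mono) simp
  then have "[:-x, 1:] * (\<Prod>y\<in>F. [:-y, 1:]) dvd p" using r by (simp only: mult.commute)
  then show ?case using insert by simp
qed simp

lemma degree_prod_lin: "finite T \<Longrightarrow> degree (\<Prod>y\<in>T. [:-y, 1::'b::idom:]) = card T"
  by (subst degree_prod_sum_eq) auto

lemma lead_prod_lin: "lead_coeff (\<Prod>y\<in>T. [:-y, 1::'b::idom:]) = 1"
  by (simp add: lead_coeff_prod)

definition Sset :: "nat \<Rightarrow> 'a::{finite,field} alg_closure set" where
  "Sset l = {y. y ^ (card (UNIV::'a set) ^ l) = y \<and> y ^ card (UNIV::'a set) \<noteq> y}"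

lemma card_Sset:
  assumes "l \<ge> 1"
  shows "card (Sset l :: 'a::{finite,field} alg_closure set) = card (UNIV::'a set) ^ l - card (UNIV::'a set)"
    and "finite (Sset l :: 'a::{finite,field} alg_closure set)"
proof -
  let ?q = "card (UNIV::'a set)"
  let ?R = "{y::'a alg_closure. y ^ (?q ^ l) = y}"
  have cR: "card ?R = ?q ^ l" by (rule sep_count[OF refl assms])
  have finR: "finite ?R" using cR Q_pos[OF refl, where k=l and 'a='a] by (intro card_ge_0_finite) simp
  have sub: "range to_ac \<subseteq> ?R" using frob_to_ac[OF refl, where k=l] by auto
  have "Sset l = ?R - range to_ac"
  proof
    show "Sset l \<subseteq> ?R - range to_ac"
      unfolding Sset_def using frob_to_ac[OF refl, where k=1] by auto
    show "?R - range to_ac \<subseteq> Sset l"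
      unfolding Sset_def using frob_fixed_in_range by blast
  qed
  then show "card (Sset l :: 'a alg_closure set) = ?q ^ l - ?q" "finite (Sset l :: 'a alg_closure set)"
    using card_Diff_subset[OF finite_subset[OF sub finR] sub] cR finR
    by (simp_all add: card_image inj_to_ac)
qed

lemma orbit_props:
  fixes b :: "'a::{finite,field} alg_closure"
  assumes l: "prime l" and b: "b \<in> Sset l"
  defines "Ob \<equiv> (\<lambda>k. b ^ (card (UNIV::'a set) ^ k)) ` {..<l}"
  shows "card Ob = l" "Ob \<subseteq> Sset l" "\<And>y. y \<in> Ob \<Longrightarrow> y ^ card (UNIV::'a set) \<in> Ob"
        "\<And>y. y \<in> Ob \<Longrightarrow> \<exists>j. b = y ^ (card (UNIV::'a set) ^ j)" "b \<in> Ob" "finite Ob"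
proof -
  let ?q = "card (UNIV::'a set)"
  have bl: "b ^ (?q ^ l) = b" and bq: "b ^ ?q \<noteq> b" using b by (auto simp: Sset_def)
  have l0: "l > 0" using l prime_gt_0_nat by blast
  show "card Ob = l" unfolding Ob_def by (rule card_orbit[OF l refl bl bq])
  show "Ob \<subseteq> Sset l" unfolding Ob_def Sset_def using orbit_elem[OF refl bl bq] by auto
  show "finite Ob" unfolding Ob_def by simp
  show "b \<in> Ob" unfolding Ob_def using l0 by (auto intro!: image_eqI[of _ _ 0])
  show "y ^ ?q \<in> Ob" if "y \<in> Ob" for y
  proof -
    from that obtain k where k: "k < l" "y = b ^ (?q ^ k)" unfolding Ob_def by auto
    have yq: "y ^ ?q = b ^ (?q ^ Suc k)" using k pow_pow_q[of b ?q k 1] by simp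
    show ?thesis
    proof (cases "Suc k < l")
      case True then show ?thesis unfolding Ob_def using yq by (auto intro!: image_eqI[of _ _ "Suc k"])
    next
      case False
      then have "Suc k = l" using k by simp
      then have "y ^ ?q = b ^ (?q ^ 0)" using yq bl by simp
      moreover have "b ^ (?q ^ 0) \<in> Ob" unfolding Ob_def using l0 by blast
      ultimately show ?thesis by simp
    qed
  qed
  show "\<exists>j. b = y ^ (?q ^ j)" if "y \<in> Ob" for y
  proof -
    from that obtain k where k: "k < l" "y = b ^ (?q ^ k)" unfolding Ob_def by auto
    have "y ^ (?q ^ (l - k)) = b ^ (?q ^ (k + (l - k)))" using k pow_pow_q[of b ?q k "l - k"] by simp
    also have "\<dots> = b" using k bl by simp
    finally show ?thesis by metis
  qed
qed

lemma exists_stable: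
  assumes l: "prime l" and kl: "k * l \<le> card (Sset l :: 'a::{finite,field} alg_closure set)"
  shows "\<exists>T::'a alg_closure set. T \<subseteq> Sset l \<and> finite T \<and> card T = k * l \<and>
            (\<forall>y\<in>T. y ^ card (UNIV::'a set) \<in> T)"
  using kl
proof (induction k)
  case 0 then show ?case by (intro exI[of _ "{}"]) simp
next
  case (Suc k)
  let ?q = "card (UNIV::'a set)"
  have l0: "l > 0" using l prime_gt_0_nat by blast
  have finS: "finite (Sset l :: 'a alg_closure set)" using card_Sset(2)[of l] l0 by simp
  from Suc obtain T :: "'a alg_closure set" where T: "T \<subseteq> Sset l" "finite T" "card T = k * l"
      "\<forall>y\<in>T. y ^ ?q \<in> T" by auto
  have "card T < card (Sset l :: 'a alg_closure set)" using T(3) Suc.prems l0 by simp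
  then have "Sset l - T \<noteq> {}" using T(2) by (metis Diff_eq_empty_iff card_mono not_less)
  then obtain b where b: "b \<in> Sset l" "b \<notin> T" by blast
  define Ob where "Ob = (\<lambda>k. b ^ (?q ^ k)) ` {..<l}"
  note op = orbit_props[OF l b(1), folded Ob_def]
  have disj: "Ob \<inter> T = {}"
  proof (rule ccontr)
    assume "Ob \<inter> T \<noteq> {}"
    then obtain y where y: "y \<in> Ob" "y \<in> T" by auto
    obtain j where "b = y ^ (?q ^ j)" using op(4)[OF y(1)] by blast
    moreover have "y ^ (?q ^ j) \<in> T" by (rule stable_iter[of T ?q, OF _ y(2)]) (use T(4) in auto)
    ultimately show False using b(2) by simp
  qed
  show ?case
  proof (intro exI[of _ "T \<union> Ob"] conjI)
    show "T \<union> Ob \<subseteq> Sset l" using T(1) op(2) by auto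
    show "finite (T \<union> Ob)" using T(2) op(6) by simp
    have "T \<inter> Ob = {}" using disj by blast
    then show "card (T \<union> Ob) = Suc k * l" using card_Un_disjoint[OF T(2) op(6)] T(3) op(1) by simp
    show "\<forall>y\<in>T \<union> Ob. y ^ ?q \<in> T \<union> Ob" using T(4) op(3) by auto
  qed
qed


lemma construct:
  fixes L l :: nat
  assumes l: "prime l" and L: "L \<ge> 2"
    and big: "L * l + card (UNIV::'a::{finite,field} set) \<le> card (UNIV::'a set) ^ l"
  shows "\<exists>g::'a poly. lead_coeff g = 1 \<and> degree g = L * l \<and> squarefree g \<and>
            (\<forall>P. irreducible P \<and> P dvd g \<longrightarrow> degree P = l)"
proof -
  let ?q = "card (UNIV::'a set)"
  have l1: "l \<ge> 1" using prime_gt_0_nat[OF l] by linarith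
  have cS: "card (Sset l :: 'a alg_closure set) = ?q ^ l - ?q" by (rule card_Sset(1)[OF l1])
  have Ll: "L * l \<le> card (Sset l :: 'a alg_closure set)" unfolding cS using big by linarith
  obtain T :: "'a alg_closure set" where T: "T \<subseteq> Sset l" "finite T" "card T = L * l"
      "\<forall>y\<in>T. y ^ ?q \<in> T"
    using exists_stable[OF l Ll] by blast
  define h where "h = (\<Prod>y\<in>T. [:-y, 1::'a alg_closure:])"
  define g where "g = map_poly of_ac h"
  have hg: "map_poly to_ac g = h" unfolding g_def h_def by (rule descent_poly) (use T in auto)
  have degh: "degree h = L * l" unfolding h_def using degree_prod_lin[OF T(2)] T(3) by simp
  have degg: "degree g = L * l" using degh hg degree_to_ac[of g] by simp
  have lg: "lead_coeff g = 1"
  proof -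
    have "to_ac (lead_coeff g) = coeff (map_poly to_ac g) (degree g)" by (simp add: coeff_map_poly)
    also have "\<dots> = lead_coeff h" using hg degree_to_ac[of g] by simp
    also have "\<dots> = 1" unfolding h_def by (rule lead_prod_lin)
    finally show ?thesis by (metis to_ac_1 to_ac_eq_iff)
  qed
  have g0: "g \<noteq> 0" using lg by auto
  have rootT: "y \<in> T" if "poly h y = 0" for y
    using that T(2) unfolding h_def by (auto simp: poly_prod prod_zero_iff)
  have irr: "degree P = l" if P: "irreducible P" "P dvd g" for P
  proof -
    have P0: "P \<noteq> 0" using P(1) by (simp add: Factorial_Ring.irreducible_def)
    have "\<not> is_unit P" using P(1) by (simp add: Factorial_Ring.irreducible_def)
    then have "degree P > 0" using is_unit_iff_degree[OF P0] by simp
    then obtain a where a: "poly (map_poly to_ac P) a = 0"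
      using alg_closed_imp_poly_has_root[of "map_poly to_ac P"] by auto
    from P(2) obtain R where R: "g = P * R" by (elim dvdE)
    have "h = map_poly to_ac P * map_poly to_ac R" using hg R to_ac_hom_mult by metis
    then have "poly h a = 0" using a by simp
    then have aT: "a \<in> T" by (rule rootT)
    then have aS: "a \<in> Sset l" using T(1) by auto
    define Ob where "Ob = (\<lambda>k. a ^ (?q ^ k)) ` {..<l}"
    note op = orbit_props[OF l aS, folded Ob_def]
    have roots: "poly (map_poly to_ac P) y = 0" if "y \<in> Ob" for y
    proof -
      from that obtain k where k: "y = a ^ (?q ^ k)" unfolding Ob_def by auto
      have "poly (map_poly to_ac P) y = (poly (map_poly to_ac P) a) ^ (?q ^ k)"
        unfolding k by (rule poly_frob[OF refl])
      then show ?thesis using a Q_pos[OF refl, where k=k and 'a='a] by simp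
    qed
    define Q0 where "Q0 = map_poly of_ac (\<Prod>y\<in>Ob. [:-y, 1::'a alg_closure:])"
    have hQ: "map_poly to_ac Q0 = (\<Prod>y\<in>Ob. [:-y, 1::'a alg_closure:])"
      unfolding Q0_def by (rule descent_poly) (use op in auto)
    have degQ: "degree Q0 = l" using hQ degree_to_ac[of Q0] degree_prod_lin[OF op(6)] op(1) by simp
    have Q00: "Q0 \<noteq> 0" using degQ l1 by auto
    have "map_poly to_ac Q0 dvd map_poly to_ac P" unfolding hQ by (rule prod_roots_dvd[OF op(6) roots])
    then have "Q0 dvd P" by (rule dvd_descent[OF Q00])
    then obtain D where D: "P = Q0 * D" by (elim dvdE)
    have "\<not> is_unit Q0" using is_unit_iff_degree[OF Q00] degQ l1 by simp
    then have "is_unit D" using Factorial_Ring.irreducibleD[OF P(1) D] by auto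
    moreover have D0: "D \<noteq> 0" using D P0 by auto
    ultimately have "degree D = 0" using is_unit_iff_degree[OF D0] by simp
    then show ?thesis using D degQ Q00 D0 by (simp add: degree_mult_eq)
  qed
  have sqf: "squarefree g"
  proof (rule squarefreeI)
    fix R :: "'a poly" assume R2: "R ^ 2 dvd g"
    show "R dvd 1"
    proof (rule ccontr)
      assume nu: "\<not> R dvd 1"
      have R0: "R \<noteq> 0" using R2 g0 by auto
      then have "degree R > 0" using nu is_unit_iff_degree[OF R0] by simp
      then obtain a where a: "poly (map_poly to_ac R) a = 0"
        using alg_closed_imp_poly_has_root[of "map_poly to_ac R"] by auto
      then have la: "[:-a, 1:] dvd map_poly to_ac R" by (simp add: poly_eq_0_iff_dvd)
      from R2 obtain S where S: "g = R * R * S" by (auto simp: power2_eq_square elim: dvdE)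
      have hS: "h = map_poly to_ac R * map_poly to_ac R * map_poly to_ac S"
        using hg S to_ac_hom_mult by metis
      then have "poly h a = 0" using a by simp
      then have aT: "a \<in> T" by (rule rootT)
      have "[:-a, 1:] * [:-a, 1:] dvd map_poly to_ac R * map_poly to_ac R"
        by (rule mult_dvd_mono[OF la la])
      then have d2: "[:-a, 1:] * [:-a, 1:] dvd h" unfolding hS by (rule dvd_mult2)
      have hsplit: "h = [:-a, 1:] * (\<Prod>y\<in>T - {a}. [:-y, 1:])"
        unfolding h_def by (rule prod.remove[OF T(2) aT])
      have "[:-a, 1:] dvd (\<Prod>y\<in>T - {a}. [:-y, 1::'a alg_closure:])"
        using d2 unfolding hsplit by (subst (asm) dvd_mult_cancel_left) simp_all
      then have "poly (\<Prod>y\<in>T - {a}. [:-y, 1::'a alg_closure:]) a = 0"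
        by (simp add: poly_eq_0_iff_dvd)
      then show False using T(2) by (auto simp: poly_prod prod_zero_iff)
    qed
  qed
  show ?thesis using lg degg sqf irr by blast
qed

lemma pow2_ge_sq: "n \<ge> 4 \<Longrightarrow> n * n \<le> (2::nat) ^ n"
proof (induction n rule: dec_induct)
  case base then show ?case by simp
next
  case (step n)
  have e: "Suc n * Suc n = n * n + 2 * n + 1" by simp
  have "4 * n \<le> n * n" using step(1) by (rule mult_le_mono1)
  moreover have "2 ^ Suc n = 2 * (2::nat) ^ n" by simp
  ultimately show ?case using e step(1) step(3) by linarith
qed

lemma big_enough:
  assumes "l \<ge> L + q + 4" "q \<ge> (2::nat)"
  shows "L * l + q \<le> q ^ l"
proof -
  have "q * 1 \<le> q * l" using assms by (intro mult_le_mono2) simp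
  then have "L * l + q \<le> (L + q) * l" by (simp add: algebra_simps)
  also have "\<dots> \<le> l * l" using assms by (intro mult_le_mono1) simp
  also have "\<dots> \<le> 2 ^ l" using assms by (intro pow2_ge_sq) simp
  also have "\<dots> \<le> q ^ l" using assms by (intro power_mono) simp_all
  finally show ?thesis .
qed


theorem theorem4p8:
  fixes d :: nat
  assumes "d \<ge> 1"
  shows "infinite {g :: 'a::{finite,field} poly. lead_coeff g = 1 \<and> rigid_carmichael d g}"
proof
  let ?G = "{g :: 'a::{finite,field} poly. lead_coeff g = 1 \<and> rigid_carmichael d g}"
  let ?q = "card (UNIV::'a set)"
  define L :: nat where "L = 2 * fact d"
  have L2: "L \<ge> 2" unfolding L_def using fact_ge_1[of d, where 'a=nat] by linarith
  have unb: "\<exists>g\<in>?G. degree g > N" for N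
  proof -
    obtain l where l: "prime l" "l > max N (L + ?q + 4)" using bigger_prime by blast
    have "L * l + ?q \<le> ?q ^ l" using l(2) card_ge2[where 'a='a] by (intro big_enough) simp_all
    then obtain g :: "'a poly" where g: "lead_coeff g = 1" "degree g = L * l" "squarefree g"
        "\<forall>P. irreducible P \<and> P dvd g \<longrightarrow> degree P = l"
      using construct[OF l(1) L2] by blast
    have l0: "l > 0" using l by simp
    have g0: "g \<noteq> 0" using g(1) by auto
    have degl: "degree g > l" using g(2) L2 l0 by simp
    have nu: "\<not> is_unit g" using is_unit_iff_degree[OF g0] degl by simp
    have ni: "\<not> irreducible g"
    proof
      assume "irreducible g"
      then have "degree g = l" using g(4) dvd_refl by blast
      then show False using degl by simp
    qed
    have dv: "\<forall>i\<in>{1..d}. i * degree P dvd d * degree g" if "irreducible P" "P dvd g" for P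
    proof
      fix i assume i: "i \<in> {1..d}"
      have "i dvd fact d" using i by (intro dvd_fact) auto
      then have "i * l dvd fact d * l" by (rule mult_dvd_mono) simp
      moreover have "d * degree g = (2 * d) * (fact d * l)" using g(2) by (simp add: L_def)
      moreover have "fact d * l dvd (2 * d) * (fact d * l)" by (rule dvd_triv_right)
      ultimately have "i * l dvd d * degree g" by (metis dvd_trans)
      then show "i * degree P dvd d * degree g" using g(4) that by simp
    qed
    have "g \<in> ?G" unfolding rigid_carmichael_def using g g0 nu ni dv by blast
    moreover have "degree g > N" using degl l(2) by simp
    ultimately show ?thesis by blast
  qed
  assume fin: "finite ?G"
  then have "finite (degree ` ?G)" by simp
  then obtain N where "\<forall>x\<in>degree ` ?G. x \<le> N" using finite_nat_set_iff_bounded_le by blast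
  then show False using unb[of N] by fastforce
qed


end
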